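(* Let $(x^k,\lambda^k)_{k\ge0}$ be generated by the proximal ADMM applied to (P). Suppose Assumption (A2) holds on a compact set $S$ with constants $M_f,L_f,C_\varphi,M_\varphi,L_\varphi$, and that $x^{k+1}\in S$ for some $k\ge0$. Then for every $i=0,\dots,n-1$, $$\|\lambda_i^{k+1}\|\le\frac{1-M_\varphi^{n-i}}{1-M_\varphi}M_f+\sum_{j=i}^{n-2}\rho_{j+1}M_\varphi^{j+1-i}\|x_{j+2}^{k+1}-x_{j+2}^k\|+\sum_{j=i}^{n-1}\frac{M_\varphi^{j-i}}{\eta_{j+1}}\|x_{j+1}^{k+1}-x_{j+1}^k\|,$$ equivalently $$\|\lambda_i^{k+1}\|\le\frac{1-M_\varphi^{n-i}}{1-M_\varphi}M_f+\sum_{j=i}^{n-1}B_{j,i}\|x_{j+1}^{k+1}-x_{j+1}^k\|,$$ where $B_{j,i}=\rho_jM_\varphi^{j-i}+\frac{M_\varphi^{j-i}}{\eta_{j+1}}$ for $j>i$ and $B_{i,i}=\frac{1}{\eta_{i+1}}$.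
   Context: Let $n,d\ge1$, and let $f_0,\dots,f_n:\mathbb{R}^d\to\mathbb{R}$ and $\varphi:\mathbb{R}^d\to\mathbb{R}^d$ be continuously differentiable; $\nabla\varphi$ denotes the Jacobian matrix and $\|\cdot\|$ the Euclidean norm / induced matrix 2-norm. Problem (P): minimize $\sum_{i=0}^n f_i(x_i)$ over $x=(x_0,\dots,x_n)\in(\mathbb{R}^d)^{n+1}$ subject to $x_{j+1}=\varphi(x_j)$, $j=0,\dots,n-1$. For penalty parameters $\rho_0,\dots,\rho_{n-1}>0$ and $\lambda=(\lambda_0,\dots,\lambda_{n-1})\in(\mathbb{R}^d)^n$, the augmented Lagrangian is $L_\rho(x,\lambda)=\sum_{i=0}^n f_i(x_i)+\sum_{i=0}^{n-1}\big(\langle\lambda_i,x_{i+1}-\varphi(x_i)\rangle+\frac{\rho_i}{2}\|x_{i+1}-\varphi(x_i)\|^2\big)$. Proximal ADMM: given $\eta_0,\dots,\eta_n>0$ and an initial point $(x^0,\lambda^0)$, for $k=0,1,\dots$, for $i=0,1,\dots,n$ in this order, $x_i^{k+1}$ is a (global) minimizer over $x_i$ of $L_\rho(x_0^{k+1},\dots,x_{i-1}^{k+1},x_i,x_{i+1}^k,\dots,x_n^k,\lambda^k)+\frac{1}{2\eta_i}\|x_i-x_i^k\|^2$ (assumed to exist), then $\lambda_j^{k+1}=\lambda_j^k+\rho_j(x_{j+1}^{k+1}-\varphi(x_j^{k+1}))$, $j=0,\dots,n-1$. Assumption (A2) on a compact set $S\subset(\mathbb{R}^d)^{n+1}$: there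 are constants $M_f,L_f,C_\varphi,M_\varphi,L_\varphi>0$ such that for all $x=(x_0,\dots,x_n),y=(y_0,\dots,y_n)\in S$ and all $i=0,\dots,n$: $\|\nabla f_i(x_i)\|\le M_f$, $\|\nabla f_i(x_i)-\nabla f_i(y_i)\|\le L_f\|x_i-y_i\|$, $\|\varphi(x_i)\|\le C_\varphi$, $\|\nabla\varphi(x_i)\|\le M_\varphi$, $\|\nabla\varphi(x_i)-\nabla\varphi(y_i)\|\le L_\varphi\|x_i-y_i\|$. Quotients of the form $\frac{M_\varphi^a-M_\varphi^b}{1-M_\varphi}$ ($a\le b$) denote $\sum_{l=a}^{b-1}M_\varphi^l$ (in particular when $M_\varphi=1$). *)

theory Defs
  imports "HOL-Analysis.Analysis"
begin

text \<open>Points x = (x_0,...,x_n) of (R^d)^(n+1) are functions nat => 'a (only indices <= n matter).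
  Augmented Lagrangian L_rho(x, lambda).\<close>
definition aug_lagr ::
  "nat \<Rightarrow> (nat \<Rightarrow> 'a::euclidean_space \<Rightarrow> real) \<Rightarrow> ('a \<Rightarrow> 'a) \<Rightarrow> (nat \<Rightarrow> real)
    \<Rightarrow> (nat \<Rightarrow> 'a) \<Rightarrow> (nat \<Rightarrow> 'a) \<Rightarrow> real" where
  "aug_lagr n f \<phi> \<rho> x lam =
     (\<Sum>i\<le>n. f i (x i)) +
     (\<Sum>i<n. inner (lam i) (x (Suc i) - \<phi> (x i)) + \<rho> i / 2 * (norm (x (Suc i) - \<phi> (x i)))\<^sup>2)"

text \<open>x k i = x_i^k, lam k j = lambda_j^k generated by the proximal ADMM (Gauss-Seidel sweep
  i = 0,...,n, each x_i^{k+1} a global minimizer, then the multiplier update).\<close>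
definition prox_admm ::
  "nat \<Rightarrow> (nat \<Rightarrow> 'a::euclidean_space \<Rightarrow> real) \<Rightarrow> ('a \<Rightarrow> 'a) \<Rightarrow> (nat \<Rightarrow> real) \<Rightarrow> (nat \<Rightarrow> real)
    \<Rightarrow> (nat \<Rightarrow> nat \<Rightarrow> 'a) \<Rightarrow> (nat \<Rightarrow> nat \<Rightarrow> 'a) \<Rightarrow> bool" where
  "prox_admm n f \<phi> \<rho> \<eta> x lam \<longleftrightarrow>
     (\<forall>k. \<forall>i\<le>n. \<forall>y.
        aug_lagr n f \<phi> \<rho> (\<lambda>j. if j < i then x (Suc k) j else if j = i then x (Suc k) i else x k j) (lam k)
          + 1 / (2 * \<eta> i) * (norm (x (Suc k) i - x k i))\<^sup>2
        \<le> aug_lagr n f \<phi> \<rho> (\<lambda>j. if j < i then x (Suc k) j else if j = i then y else x k j) (lam k)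
          + 1 / (2 * \<eta> i) * (norm (y - x k i))\<^sup>2) \<and>
     (\<forall>k. \<forall>j<n. lam (Suc k) j = lam k j + \<rho> j *\<^sub>R (x (Suc k) (Suc j) - \<phi> (x (Suc k) j)))"

end

theory Submission
  imports Defs
begin

lemma comp_deriv:
  fixes i j :: nat
  shows "((\<lambda>y. (if j < i then a j else if j = i then y else b j)) has_derivative (\<lambda>h. if j = i then h else 0)) (at y0)"
proof (cases "j = i")
  case True
  then have "(\<lambda>y. (if j < i then a j else if j = i then y else b j)) = (\<lambda>y. y)" by auto
  then show ?thesis using True by (simp add: has_derivative_ident)
next
  case False
  then have "(\<lambda>y. (if j < i then a j else if j = i then y else b j)) = (\<lambda>y. if j < i then a j else b j)" by auto
  then show ?thesis using False by simp
qed

lemma phi_comp: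
  fixes i j :: nat
  assumes "(\<phi> has_derivative Dp) (at y0)"
  shows "((\<lambda>y. \<phi> (if j < i then a j else if j = i then y else b j)) has_derivative (\<lambda>h. if j = i then Dp h else 0)) (at y0)"
proof (cases "j = i")
  case True
  then have "(\<lambda>y. \<phi> (if j < i then a j else if j = i then y else b j)) = \<phi>" by auto
  then show ?thesis using True assms by simp
next
  case False
  then have "(\<lambda>y. \<phi> (if j < i then a j else if j = i then y else b j)) = (\<lambda>y. \<phi> (if j < i then a j else b j))" by auto
  then show ?thesis using False by simp
qed

lemma term_deriv:
  fixes \<phi> :: "'a::euclidean_space \<Rightarrow> 'a" and a b :: "nat \<Rightarrow> 'a" and i :: nat
  assumes "(\<phi> has_derivative Dp) (at y0)"
  defines "P \<equiv> \<lambda>y j. (if j < i then a j else if j = i then y else b j)"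
  shows "((\<lambda>y. inner (L j) (P y (Suc j) - \<phi> (P y j)) + r / 2 * (norm (P y (Suc j) - \<phi> (P y j)))\<^sup>2)
     has_derivative (\<lambda>h. inner (L j + r *\<^sub>R (P y0 (Suc j) - \<phi> (P y0 j))) ((if Suc j = i then h else 0) - (if j = i then Dp h else 0)))) (at y0)"
proof -
  have d: "((\<lambda>y. P y (Suc j) - \<phi> (P y j)) has_derivative (\<lambda>h. (if Suc j = i then h else 0) - (if j = i then Dp h else 0))) (at y0)"
    unfolding P_def by (intro has_derivative_diff comp_deriv phi_comp assms)
  have "((\<lambda>y. inner (L j) (P y (Suc j) - \<phi> (P y j)) + r / 2 * inner (P y (Suc j) - \<phi> (P y j)) (P y (Suc j) - \<phi> (P y j)))
     has_derivative (\<lambda>h. (inner (L j) ((if Suc j = i then h else 0) - (if j = i then Dp h else 0)) + inner 0 (P y0 (Suc j) - \<phi> (P y0 j))) + r / 2 * (inner (P y0 (Suc j) - \<phi> (P y0 j)) ((if Suc j = i then h else 0) - (if j = i then Dp h else 0)) + inner ((if Suc j = i then h else 0) - (if j = i then Dp h else 0)) (P y0 (Suc j) - \<phi> (P y0 j))))) (at y0)"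
    by (intro has_derivative_add has_derivative_mult_right has_derivative_inner d has_derivative_const)
  then show ?thesis
    by (simp add: power2_norm_eq_inner inner_add_left inner_commute algebra_simps)
qed

lemma f_term_deriv:
  fixes i j :: nat and f :: "nat \<Rightarrow> 'a::euclidean_space \<Rightarrow> real"
  assumes "(f i has_derivative Df) (at y0)"
  shows "((\<lambda>y. f j (if j < i then a j else if j = i then y else b j)) has_derivative (\<lambda>h. if j = i then Df h else 0)) (at y0)"
proof (cases "j = i")
  case True
  then have "(\<lambda>y. f j (if j < i then a j else if j = i then y else b j)) = f i" by auto
  then show ?thesis using True assms by simp
next
  case False
  then have "(\<lambda>y. f j (if j < i then a j else if j = i then y else b j)) = (\<lambda>y. f j (if j < i then a j else b j))" by auto
  then show ?thesis using False by simp
qed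

lemma F_deriv:
  fixes \<phi> :: "'a::euclidean_space \<Rightarrow> 'a" and a b L :: "nat \<Rightarrow> 'a" and i n :: nat
    and f :: "nat \<Rightarrow> 'a \<Rightarrow> real"
  assumes iN: "i \<le> n" and fd: "(f i has_derivative (\<lambda>h. inner G h)) (at y0)"
    and pd: "(\<phi> has_derivative Dp) (at y0)"
  defines "P \<equiv> \<lambda>y j. (if j < i then a j else if j = i then y else b j)"
  shows "((\<lambda>y. aug_lagr n f \<phi> \<rho> (P y) L + c * (norm (y - z))\<^sup>2) has_derivative
    (\<lambda>h. inner G h + (\<Sum>j<n. inner (L j + \<rho> j *\<^sub>R (P y0 (Suc j) - \<phi> (P y0 j))) ((if Suc j = i then h else 0) - (if j = i then Dp h else 0)))
       + c * (2 * inner (y0 - z) h))) (at y0)"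
proof -
  have s1: "((\<lambda>y. \<Sum>j\<le>n. f j (P y j)) has_derivative (\<lambda>h. \<Sum>j\<le>n. if j = i then inner G h else 0)) (at y0)"
    unfolding P_def by (intro has_derivative_sum f_term_deriv fd)
  have s1': "(\<lambda>h. \<Sum>j\<le>n. if j = i then inner G h else 0) = (\<lambda>h. inner G h)"
    using iN by (simp add: sum.delta)
  have s2: "((\<lambda>y. \<Sum>j<n. inner (L j) (P y (Suc j) - \<phi> (P y j)) + \<rho> j / 2 * (norm (P y (Suc j) - \<phi> (P y j)))\<^sup>2) has_derivative
    (\<lambda>h. \<Sum>j<n. inner (L j + \<rho> j *\<^sub>R (P y0 (Suc j) - \<phi> (P y0 j))) ((if Suc j = i then h else 0) - (if j = i then Dp h else 0)))) (at y0)"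
    unfolding P_def by (intro has_derivative_sum term_deriv pd)
  have s3: "((\<lambda>y. c * (norm (y - z))\<^sup>2) has_derivative (\<lambda>h. c * (2 * inner (y0 - z) h))) (at y0)"
  proof -
    have "((\<lambda>y. c * inner (y - z) (y - z)) has_derivative (\<lambda>h. c * (inner (y0 - z) (h - 0) + inner (h - 0) (y0 - z)))) (at y0)"
      by (intro has_derivative_mult_right has_derivative_inner has_derivative_diff has_derivative_ident has_derivative_const)
    then show ?thesis by (simp add: power2_norm_eq_inner inner_commute)
  qed
  show ?thesis
    unfolding aug_lagr_def
    using has_derivative_add[OF has_derivative_add[OF s1 s2] s3] iN by simp
qed

lemma sum_shift_if:
  fixes W :: "nat \<Rightarrow> 'a::real_inner" and i n :: nat
  assumes "1 \<le> i" "i \<le> n"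
  shows "(\<Sum>j<n. inner (W j) ((if Suc j = i then h else 0) - (if j = i then Dp h else 0)))
    = inner (W (i - 1)) h - (if i < n then inner (W i) (Dp h) else 0)"
proof -
  have a: "(\<Sum>j<n. inner (W j) (if Suc j = i then h else 0)) = (\<Sum>j<n. if j = i - 1 then inner (W j) h else 0)"
    using assms by (intro sum.cong) auto
  have b: "(\<Sum>j<n. inner (W j) (if j = i then Dp h else 0)) = (\<Sum>j<n. if j = i then inner (W j) (Dp h) else 0)"
    by (intro sum.cong) auto
  show ?thesis
    unfolding inner_diff_right sum_subtractf a b using assms by (simp add: sum.delta)
qed

lemma step:
  fixes f :: "nat \<Rightarrow> 'a::euclidean_space \<Rightarrow> real" and gf :: "nat \<Rightarrow> 'a \<Rightarrow> 'a"
    and \<phi> :: "'a \<Rightarrow> 'a" and D\<phi> :: "'a \<Rightarrow> 'a \<Rightarrow>\<^sub>L 'a"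
    and \<rho> \<eta> :: "nat \<Rightarrow> real" and x lam :: "nat \<Rightarrow> nat \<Rightarrow> 'a"
  assumes admm: "prox_admm n f \<phi> \<rho> \<eta> x lam"
    and fg: "(f i has_derivative (\<lambda>h. inner (gf i (x (Suc k) i)) h)) (at (x (Suc k) i))"
    and pd: "(\<phi> has_derivative blinfun_apply (D\<phi> (x (Suc k) i))) (at (x (Suc k) i))"
    and i1: "1 \<le> i" and iN: "i \<le> n" and eta: "\<eta> i > 0" and rho: "i < n \<Longrightarrow> \<rho> i > 0"
    and gb: "norm (gf i (x (Suc k) i)) \<le> Mf"
    and db: "norm (D\<phi> (x (Suc k) i)) \<le> M\<phi>"
  shows "norm (lam (Suc k) (i - 1)) \<le> Mf + norm (x (Suc k) i - x k i) / \<eta> i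
     + (if i < n then M\<phi> * (norm (lam (Suc k) i) + \<rho> i * norm (x (Suc k) (Suc i) - x k (Suc i))) else 0)"
proof -
  define y0 where "y0 = x (Suc k) i"
  define P where "P = (\<lambda>y j. (if j < i then x (Suc k) j else if j = i then y else x k j))"
  define c where "c = 1 / (2 * \<eta> i)"
  define F where "F = (\<lambda>y. aug_lagr n f \<phi> \<rho> (P y) (lam k) + c * (norm (y - x k i))\<^sup>2)"
  define W where "W = (\<lambda>j. lam k j + \<rho> j *\<^sub>R (P y0 (Suc j) - \<phi> (P y0 j)))"
  define Dp where "Dp = blinfun_apply (D\<phi> y0)"
  have der: "(F has_derivative (\<lambda>h. inner (gf i y0) h + (\<Sum>j<n. inner (W j) ((if Suc j = i then h else 0) - (if j = i then Dp h else 0)))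
       + c * (2 * inner (y0 - x k i) h))) (at y0)"
    unfolding F_def W_def P_def Dp_def y0_def
    by (rule F_deriv[OF iN]) (use fg pd in auto)
  have mn: "\<forall>y\<in>UNIV. F y0 \<le> F y"
    using admm iN unfolding prox_admm_def F_def P_def c_def y0_def by blast
  have z: "(\<lambda>h. inner (gf i y0) h + (\<Sum>j<n. inner (W j) ((if Suc j = i then h else 0) - (if j = i then Dp h else 0)))
       + c * (2 * inner (y0 - x k i) h)) = (\<lambda>v. 0)"
    by (rule differential_zero_maxmin[OF _ open_UNIV der]) (use mn in auto)
  define v where "v = lam (Suc k) (i - 1)"
  have W1: "W (i - 1) = v"
  proof -
    have "i - 1 < n" using i1 iN by simp
    then have "lam (Suc k) (i - 1) = lam k (i - 1) + \<rho> (i - 1) *\<^sub>R (x (Suc k) (Suc (i - 1)) - \<phi> (x (Suc k) (i - 1)))"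
      using admm unfolding prox_admm_def by blast
    then show ?thesis using i1 unfolding W_def P_def v_def y0_def by simp
  qed
  have W2: "i < n \<Longrightarrow> W i = lam (Suc k) i - \<rho> i *\<^sub>R (x (Suc k) (Suc i) - x k (Suc i))"
  proof -
    assume "i < n"
    then have "lam (Suc k) i = lam k i + \<rho> i *\<^sub>R (x (Suc k) (Suc i) - \<phi> (x (Suc k) i))"
      using admm unfolding prox_admm_def by blast
    then show ?thesis unfolding W_def P_def y0_def by (simp add: algebra_simps)
  qed
  have eq0: "inner (gf i y0) v + inner v v - (if i < n then inner (W i) (Dp v) else 0) + c * (2 * inner (y0 - x k i) v) = 0"
    using fun_cong[OF z, of v] sum_shift_if[OF i1 iN, of W v Dp] W1 by simp
  define K where "K = Mf + norm (x (Suc k) i - x k i) / \<eta> i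
     + (if i < n then M\<phi> * (norm (lam (Suc k) i) + \<rho> i * norm (x (Suc k) (Suc i) - x k (Suc i))) else 0)"
  have t1: "\<bar>inner (gf i y0) v\<bar> \<le> Mf * norm v"
    using Cauchy_Schwarz_ineq2[of "gf i y0" v] mult_right_mono[OF gb norm_ge_zero, of v] unfolding y0_def by linarith
  have c2: "c * 2 = 1 / \<eta> i" unfolding c_def using eta by simp
  have t2: "\<bar>c * (2 * inner (y0 - x k i) v)\<bar> \<le> norm (x (Suc k) i - x k i) / \<eta> i * norm v"
  proof -
    have "\<bar>c * (2 * inner (y0 - x k i) v)\<bar> = \<bar>inner (y0 - x k i) v\<bar> / \<eta> i"
      using c2 eta by (simp add: abs_mult mult.assoc[symmetric])
    also have "\<dots> \<le> norm (y0 - x k i) * norm v / \<eta> i"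
      using eta Cauchy_Schwarz_ineq2 by (intro divide_right_mono) auto
    finally show ?thesis unfolding y0_def by simp
  qed
  have t3: "\<bar>if i < n then inner (W i) (Dp v) else 0\<bar> \<le> (if i < n then M\<phi> * (norm (lam (Suc k) i) + \<rho> i * norm (x (Suc k) (Suc i) - x k (Suc i))) else 0) * norm v"
  proof (cases "i < n")
    case True
    have "\<bar>inner (W i) (Dp v)\<bar> \<le> norm (W i) * norm (Dp v)" by (rule Cauchy_Schwarz_ineq2)
    also have "\<dots> \<le> (norm (lam (Suc k) i) + \<rho> i * norm (x (Suc k) (Suc i) - x k (Suc i))) * (M\<phi> * norm v)"
    proof (rule mult_mono)
      show "norm (W i) \<le> norm (lam (Suc k) i) + \<rho> i * norm (x (Suc k) (Suc i) - x k (Suc i))"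
        using W2[OF True] rho[OF True] norm_triangle_ineq4[of "lam (Suc k) i" "\<rho> i *\<^sub>R (x (Suc k) (Suc i) - x k (Suc i))"]
        by simp
      show "norm (Dp v) \<le> M\<phi> * norm v"
        unfolding Dp_def y0_def using norm_blinfun[of "D\<phi> (x (Suc k) i)" v] db
        by (meson mult_right_mono norm_ge_zero order_trans)
    qed (use rho[OF True] in auto)
    finally show ?thesis using True by (simp add: algebra_simps)
  qed simp
  have "norm v ^ 2 \<le> K * norm v"
  proof -
    have "norm v ^ 2 = inner v v" by (simp add: power2_norm_eq_inner)
    also have "\<dots> = - inner (gf i y0) v + (if i < n then inner (W i) (Dp v) else 0) - c * (2 * inner (y0 - x k i) v)"
      using eq0 by linarith
    also have "\<dots> \<le> K * norm v"
      using t1 t2 t3 unfolding K_def by (simp add: algebra_simps)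
    finally show ?thesis .
  qed
  moreover have "K \<ge> 0"
  proof -
    have "Mf \<ge> 0" using gb norm_ge_zero order_trans by blast
    moreover have "M\<phi> \<ge> 0" using db norm_ge_zero order_trans by blast
    ultimately show ?thesis unfolding K_def using eta rho by (auto intro!: add_nonneg_nonneg mult_nonneg_nonneg)
  qed
  ultimately have "norm v \<le> K"
    by (cases "norm v = 0") (auto simp: power2_eq_square)
  then show ?thesis unfolding K_def v_def .
qed

lemma rec_B:
  fixes M Mf :: real and r e a :: "nat \<Rightarrow> real" and m n :: nat
  assumes mn: "Suc m < n"
  defines "B \<equiv> \<lambda>m. (\<Sum>l<n - m. M ^ l) * Mf + (\<Sum>j\<in>{m..<n - 1}. r (j + 1) * M ^ (j + 1 - m) * a (j + 2))
     + (\<Sum>j\<in>{m..<n}. M ^ (j - m) / e (j + 1) * a (j + 1))"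
  shows "B m = Mf + a (Suc m) / e (Suc m) + M * (B (Suc m) + r (Suc m) * a (Suc (Suc m)))"
proof -
  have nm: "n - m = Suc (n - Suc m)" using mn by simp
  have p1: "(\<Sum>l<n - m. M ^ l) = 1 + M * (\<Sum>l<n - Suc m. M ^ l)"
    unfolding nm sum.lessThan_Suc_shift by (simp add: sum_distrib_left)
  have p2: "(\<Sum>j\<in>{m..<n - 1}. r (j + 1) * M ^ (j + 1 - m) * a (j + 2))
     = r (Suc m) * M * a (Suc (Suc m)) + M * (\<Sum>j\<in>{Suc m..<n - 1}. r (j + 1) * M ^ (j + 1 - Suc m) * a (j + 2))"
  proof -
    have "(\<Sum>j\<in>{m..<n - 1}. r (j + 1) * M ^ (j + 1 - m) * a (j + 2))
       = r (m + 1) * M ^ (m + 1 - m) * a (m + 2) + (\<Sum>j\<in>{Suc m..<n - 1}. r (j + 1) * M ^ (j + 1 - m) * a (j + 2))"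
      using mn by (subst sum.atLeast_Suc_lessThan) auto
    also have "(\<Sum>j\<in>{Suc m..<n - 1}. r (j + 1) * M ^ (j + 1 - m) * a (j + 2))
       = M * (\<Sum>j\<in>{Suc m..<n - 1}. r (j + 1) * M ^ (j + 1 - Suc m) * a (j + 2))"
      unfolding sum_distrib_left
    proof (intro sum.cong refl)
      fix j assume "j \<in> {Suc m..<n - 1}"
      then have "j + 1 - m = Suc (j + 1 - Suc m)" by auto
      then show "r (j + 1) * M ^ (j + 1 - m) * a (j + 2) = M * (r (j + 1) * M ^ (j + 1 - Suc m) * a (j + 2))"
        by simp
    qed
    finally show ?thesis by simp
  qed
  have p3: "(\<Sum>j\<in>{m..<n}. M ^ (j - m) / e (j + 1) * a (j + 1))
     = a (Suc m) / e (Suc m) + M * (\<Sum>j\<in>{Suc m..<n}. M ^ (j - Suc m) / e (j + 1) * a (j + 1))"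
  proof -
    have "(\<Sum>j\<in>{m..<n}. M ^ (j - m) / e (j + 1) * a (j + 1))
       = M ^ (m - m) / e (m + 1) * a (m + 1) + (\<Sum>j\<in>{Suc m..<n}. M ^ (j - m) / e (j + 1) * a (j + 1))"
      using mn by (subst sum.atLeast_Suc_lessThan) auto
    also have "(\<Sum>j\<in>{Suc m..<n}. M ^ (j - m) / e (j + 1) * a (j + 1))
       = M * (\<Sum>j\<in>{Suc m..<n}. M ^ (j - Suc m) / e (j + 1) * a (j + 1))"
      unfolding sum_distrib_left
    proof (intro sum.cong refl)
      fix j assume "j \<in> {Suc m..<n}"
      then have "j - m = Suc (j - Suc m)" by auto
      then show "M ^ (j - m) / e (j + 1) * a (j + 1) = M * (M ^ (j - Suc m) / e (j + 1) * a (j + 1))"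
        by simp
    qed
    finally show ?thesis by simp
  qed
  show ?thesis unfolding B_def p1 p2 p3 by (simp add: algebra_simps)
qed

theorem lemma1:
  fixes n :: nat
    and f :: "nat \<Rightarrow> 'a::euclidean_space \<Rightarrow> real" and gf :: "nat \<Rightarrow> 'a \<Rightarrow> 'a"
    and \<phi> :: "'a \<Rightarrow> 'a" and D\<phi> :: "'a \<Rightarrow> 'a \<Rightarrow>\<^sub>L 'a"
    and \<rho> \<eta> :: "nat \<Rightarrow> real"
    and x lam :: "nat \<Rightarrow> nat \<Rightarrow> 'a"
    and S :: "(nat \<Rightarrow> 'a) set"
    and Mf Lf C\<phi> M\<phi> L\<phi> :: real
    and k :: nat
  assumes n_pos: "n \<ge> 1"
    and f_grad: "\<And>i z. i \<le> n \<Longrightarrow> (f i has_derivative (\<lambda>h. inner (gf i z) h)) (at z)"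
    and gf_cont: "\<And>i. i \<le> n \<Longrightarrow> continuous_on UNIV (gf i)"
    and \<phi>_deriv: "\<And>z. (\<phi> has_derivative blinfun_apply (D\<phi> z)) (at z)"
    and D\<phi>_cont: "continuous_on UNIV D\<phi>"
    and \<rho>_pos: "\<And>i. i < n \<Longrightarrow> \<rho> i > 0"
    and \<eta>_pos: "\<And>i. i \<le> n \<Longrightarrow> \<eta> i > 0"
    and admm: "prox_admm n f \<phi> \<rho> \<eta> x lam"
    and S_compact: "compact S" and S_ext: "S \<subseteq> extensional {..n}"
    and consts_pos: "Mf > 0" "Lf > 0" "C\<phi> > 0" "M\<phi> > 0" "L\<phi> > 0"
    and A2: "\<And>u v i. u \<in> S \<Longrightarrow> v \<in> S \<Longrightarrow> i \<le> n \<Longrightarrow>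
        norm (gf i (u i)) \<le> Mf \<and>
        norm (gf i (u i) - gf i (v i)) \<le> Lf * norm (u i - v i) \<and>
        norm (\<phi> (u i)) \<le> C\<phi> \<and>
        norm (D\<phi> (u i)) \<le> M\<phi> \<and>
        norm (D\<phi> (u i) - D\<phi> (v i)) \<le> L\<phi> * norm (u i - v i)"
    and in_S: "restrict (x (Suc k)) {..n} \<in> S"
  shows "\<forall>i<n. norm (lam (Suc k) i) \<le>
      (\<Sum>l<n - i. M\<phi> ^ l) * Mf
      + (\<Sum>j\<in>{i..<n - 1}. \<rho> (j + 1) * M\<phi> ^ (j + 1 - i) * norm (x (Suc k) (j + 2) - x k (j + 2)))
      + (\<Sum>j\<in>{i..<n}. M\<phi> ^ (j - i) / \<eta> (j + 1) * norm (x (Suc k) (j + 1) - x k (j + 1)))"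
  proof -
  define a where "a = (\<lambda>j. norm (x (Suc k) j - x k j))"
  define B where "B = (\<lambda>m. (\<Sum>l<n - m. M\<phi> ^ l) * Mf + (\<Sum>j\<in>{m..<n - 1}. \<rho> (j + 1) * M\<phi> ^ (j + 1 - m) * a (j + 2))
     + (\<Sum>j\<in>{m..<n}. M\<phi> ^ (j - m) / \<eta> (j + 1) * a (j + 1)))"
  have bnds: "norm (gf i (x (Suc k) i)) \<le> Mf \<and> norm (D\<phi> (x (Suc k) i)) \<le> M\<phi>" if "i \<le> n" for i
    using A2[OF in_S in_S that] that by simp
  have st: "norm (lam (Suc k) (i - 1)) \<le> Mf + a i / \<eta> i
     + (if i < n then M\<phi> * (norm (lam (Suc k) i) + \<rho> i * a (Suc i)) else 0)"
    if "1 \<le> i" "i \<le> n" for i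
  proof -
    have "norm (lam (Suc k) (i - 1)) \<le> Mf + norm (x (Suc k) i - x k i) / \<eta> i
     + (if i < n then M\<phi> * (norm (lam (Suc k) i) + \<rho> i * norm (x (Suc k) (Suc i) - x k (Suc i))) else 0)"
      by (rule step[where gf=gf and x=x and k=k and i=i and D\<phi>=D\<phi> and f=f, OF admm f_grad[OF that(2), of "x (Suc k) i"] \<phi>_deriv[of "x (Suc k) i"] that(1) that(2) \<eta>_pos[OF that(2)] \<rho>_pos[of i]
          conjunct1[OF bnds[OF that(2)]] conjunct2[OF bnds[OF that(2)]]])
    then show ?thesis by (simp only: a_def)
  qed
  have main: "norm (lam (Suc k) (n - 1 - d)) \<le> B (n - 1 - d)" if "d < n" for d
    using that
  proof (induction d)
    case 0
    obtain n' where n': "n = Suc n'" using n_pos by (cases n) auto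
    have "B n' = Mf + a (Suc n') / \<eta> (Suc n')" unfolding B_def n' by simp
    then have "B (n - 1) = Mf + a n / \<eta> n" using n' by simp
    then show ?case using st[of n] n_pos by simp
  next
    case (Suc d)
    define m where "m = n - 1 - Suc d"
    have mn: "Suc m < n" and md: "Suc m = n - 1 - d" using Suc.prems unfolding m_def by auto
    have ih: "norm (lam (Suc k) (Suc m)) \<le> B (Suc m)" using Suc md by simp
    have "norm (lam (Suc k) m) \<le> Mf + a (Suc m) / \<eta> (Suc m) + M\<phi> * (norm (lam (Suc k) (Suc m)) + \<rho> (Suc m) * a (Suc (Suc m)))"
      using st[of "Suc m"] mn by simp
    also have "\<dots> \<le> Mf + a (Suc m) / \<eta> (Suc m) + M\<phi> * (B (Suc m) + \<rho> (Suc m) * a (Suc (Suc m)))"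
      using ih consts_pos(4) by simp
    also have "\<dots> = B m" unfolding B_def by (rule rec_B[OF mn, symmetric])
    finally show ?case unfolding m_def .
  qed
  show ?thesis
  proof (intro allI impI)
    fix i assume "i < n"
    then have "norm (lam (Suc k) (n - 1 - (n - 1 - i))) \<le> B (n - 1 - (n - 1 - i))" by (intro main) auto
    moreover have "n - 1 - (n - 1 - i) = i" using \<open>i < n\<close> by simp
    ultimately show "norm (lam (Suc k) i) \<le> (\<Sum>l<n - i. M\<phi> ^ l) * Mf
      + (\<Sum>j\<in>{i..<n - 1}. \<rho> (j + 1) * M\<phi> ^ (j + 1 - i) * norm (x (Suc k) (j + 2) - x k (j + 2)))
      + (\<Sum>j\<in>{i..<n}. M\<phi> ^ (j - i) / \<eta> (j + 1) * norm (x (Suc k) (j + 1) - x k (j + 1)))"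
      unfolding B_def a_def by simp
  qed
qed

end
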